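(* Let $\beta>0$, $\beta'=\beta/2$. For each $n\ge1$ let $\lambda^{(n)}=(\lambda_1,\dots,\lambda_n)$ be a random vector in $\mathbb{R}^n$ with almost surely pairwise distinct coordinates, and let $w^{(n)}=(w_1,\dots,w_n)$ be independent of $\lambda^{(n)}$ with Dirichlet distribution with all parameters equal to $\beta'$; all random variables are defined on one probability space. Let $\hat\mu_n=\frac1n\sum_i\delta_{\lambda_i}$ and $\mu_n=\sum_i w_i\delta_{\lambda_i}$. Then $$d_K(\hat\mu_n,\mu_n)\xrightarrow[n\to\infty]{}0\quad\text{almost surely}.$$
   Context: For probability measures $\mu,\nu$ on $\mathbb{R}$ with distribution functions $F_\mu,F_\nu$, the Kolmogorov distance is $d_K(\mu,\nu)=\sup_{x\in\mathbb R}|F_\mu(x)-F_\nu(x)|$. *)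

theory Defs
  imports "HOL-Probability.Probability"
begin

text \<open>It is defined by its standard density
  Gamma(n a) / Gamma(a)^n * prod_i w_i^(a-1) on the open simplex, with respect to
  Lebesgue measure on the first n-1 coordinates, the last coordinate being 1 - sum of the others.\<close>
definition dirichlet_sym :: "nat \<Rightarrow> real \<Rightarrow> (nat \<Rightarrow> real) measure" where
  "dirichlet_sym n a =
     distr
       (density (PiM {..<n-1} (\<lambda>_. lborel))
          (\<lambda>x. ennreal (indicator {y. (\<forall>i<n-1. 0 < y i) \<and> (\<Sum>i<n-1. y i) < 1} x
             * (Gamma (real n * a) / Gamma a ^ n)
             * (\<Prod>i<n-1. x i powr (a - 1)) * (1 - (\<Sum>i<n-1. x i)) powr (a - 1))))
       (PiM {..<n} (\<lambda>_. borel))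
       (\<lambda>x. \<lambda>i\<in>{..<n}. if i < n - 1 then x i else 1 - (\<Sum>j<n-1. x j))"

definition atomic_cdf :: "nat \<Rightarrow> (nat \<Rightarrow> real) \<Rightarrow> (nat \<Rightarrow> real) \<Rightarrow> real \<Rightarrow> real" where
  "atomic_cdf n l w x = (\<Sum>i<n. if l i \<le> x then w i else 0)"

definition kolmogorov_dist :: "(real \<Rightarrow> real) \<Rightarrow> (real \<Rightarrow> real) \<Rightarrow> real" where
  "kolmogorov_dist F G = (SUP x. \<bar>F x - G x\<bar>)"

end

theory Submission
  imports Defs
begin


lemma beta_scaled:
  fixes t a c :: real
  assumes t: "t > 0" and a: "a > 0" and c: "c > 0"
  shows "(\<integral>\<^sup>+y. ennreal (indicator {0<..<t} y * (y powr (a - 1) * (t - y) powr (c - 1))) \<partial>lborel)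
         = ennreal (t powr (a + c - 1) * Beta a c)"
proof -
  let ?f = "\<lambda>y::real. ennreal (indicator {0<..<t} y * (y powr (a - 1) * (t - y) powr (c - 1)))"
  have "(\<integral>\<^sup>+y. ?f y \<partial>lborel) = ennreal \<bar>t\<bar> * (\<integral>\<^sup>+u. ?f (0 + t * u) \<partial>lborel)"
    by (rule nn_integral_real_affine) (use t in auto)
  also have "(\<integral>\<^sup>+u. ?f (0 + t * u) \<partial>lborel) =
      (\<integral>\<^sup>+u. ennreal (t powr (a - 1) * t powr (c - 1)) *
          ennreal (indicator {0<..<1} u * (u powr (a - 1) * (1 - u) powr (c - 1))) \<partial>lborel)"
  proof (intro nn_integral_cong)
    fix u :: real
    show "?f (0 + t * u) = ennreal (t powr (a - 1) * t powr (c - 1)) *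
          ennreal (indicator {0<..<1} u * (u powr (a - 1) * (1 - u) powr (c - 1)))"
    proof (cases "u \<in> {0<..<1}")
      case True
      have "t - t * u = t * (1 - u)" by (simp add: algebra_simps)
      moreover have "0 < t * u" "t * u < t" using True t by (auto simp: mult_less_cancel_left1)
      ultimately show ?thesis using True t
        by (simp add: indicator_def powr_mult ennreal_mult'[symmetric] mult_ac)
    next
      case False
      have "t * u \<notin> {0<..<t}"
      proof
        assume "t * u \<in> {0<..<t}"
        hence "0 < t * u" "t * u < t * 1" by auto
        hence "0 < u" "u < 1" using t by (auto simp: zero_less_mult_iff mult_less_cancel_left_pos)
        thus False using False by auto
      qed
      hence "indicator {0<..<t} (0 + t * u) = (0::real)" by simp
      moreover have "indicator {0<..<1} u = (0::real)" using False by simp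
      ultimately show ?thesis by simp
    qed
  qed
  also have "\<dots> = ennreal (t powr (a - 1) * t powr (c - 1)) *
      (\<integral>\<^sup>+u. ennreal (indicator {0<..<1} u * (u powr (a - 1) * (1 - u) powr (c - 1))) \<partial>lborel)"
    by (rule nn_integral_cmult) auto
  also have "(\<integral>\<^sup>+u. ennreal (indicator {0<..<1} u * (u powr (a - 1) * (1 - u) powr (c - 1))) \<partial>lborel)
      = ennreal (Beta a c)"
  proof -
    have I: "((\<lambda>u. u powr (a - 1) * (1 - u) powr (c - 1)) has_integral Beta a c) {0<..<1}"
      using has_integral_Beta_real[OF a c] by (simp add: has_integral_Icc_iff_Ioo)
    have "(\<integral>\<^sup>+u. ennreal (u powr (a - 1) * (1 - u) powr (c - 1)) * indicator {0<..<1} u \<partial>lborel)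
        = ennreal (Beta a c)"
      by (rule nn_integral_has_integral_lebesgue'[OF _ I]) auto
    thus ?thesis
      by (subst (asm) nn_integral_cong[where v = "\<lambda>u. ennreal (indicator {0<..<1} u * (u powr (a - 1) * (1 - u) powr (c - 1)))"])
         (auto simp: indicator_def)
  qed
  also have "ennreal \<bar>t\<bar> * (ennreal (t powr (a - 1) * t powr (c - 1)) * ennreal (Beta a c))
      = ennreal (t powr (a + c - 1) * Beta a c)"
  proof -
    have B: "Beta a c \<ge> 0" using a c by (simp add: Beta_def Gamma_real_pos less_imp_le)
    have "\<bar>t\<bar> * (t powr (a - 1) * t powr (c - 1) * Beta a c) = t powr (a + c - 1) * Beta a c"
      using t by (simp add: powr_add[symmetric] powr_mult_base algebra_simps)
    thus ?thesis using t B by (simp add: ennreal_mult'[symmetric] ennreal_mult[symmetric])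
  qed
  finally show ?thesis .
qed



definition SX :: "'i set \<Rightarrow> real \<Rightarrow> ('i \<Rightarrow> real) set" where
  "SX A t = {x. (\<forall>i\<in>A. 0 < x i) \<and> sum x A < t}"

lemma SX_step:
  assumes "b \<notin> A" "finite A"
  shows "x(b := y) \<in> SX (insert b A) t \<longleftrightarrow> 0 < y \<and> x \<in> SX A (t - y)"
proof -
  have "sum (x(b := y)) A = sum x A" using assms by (intro sum.cong) auto
  thus ?thesis using assms by (auto simp: SX_def algebra_simps)
qed

lemma dirichlet_integral:
  fixes A :: "'i set" and a :: "'i \<Rightarrow> real"
  assumes "finite A" "t > 0" "\<And>i. i \<in> A \<Longrightarrow> a i > 0" "c > 0"
  shows "(\<integral>\<^sup>+x. ennreal (indicator (SX A t) x * ((\<Prod>i\<in>A. x i powr (a i - 1)) * (t - sum x A) powr (c - 1)))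
            \<partial>Pi\<^sub>M A (\<lambda>_. lborel))
         = ennreal (t powr (sum a A + c - 1) * ((\<Prod>i\<in>A. Gamma (a i)) * Gamma c / Gamma (sum a A + c)))"
  using assms
proof (induction A arbitrary: t c rule: finite_induct)
  case (empty t c)
  thus ?case by (simp add: PiM_empty SX_def Gamma_real_pos less_imp_neq[symmetric])
next
  case (insert b A t c)
  interpret product_sigma_finite "\<lambda>_. lborel" by standard
  have SXsets: "SX B s \<inter> space (Pi\<^sub>M B (\<lambda>_. lborel)) \<in> sets (Pi\<^sub>M B (\<lambda>_. lborel))"
    if "finite B" for B :: "'i set" and s
  proof -
    have "SX B s \<inter> space (Pi\<^sub>M B (\<lambda>_. lborel)) =
          Pi\<^sub>E B (\<lambda>_. {0<..}) \<inter> (\<lambda>x. sum x B) -` {..<s} \<inter> space (Pi\<^sub>M B (\<lambda>_. lborel))"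
      by (auto simp: SX_def space_PiM)
    also have "\<dots> \<in> sets (Pi\<^sub>M B (\<lambda>_. lborel))" using that by measurable
    finally show ?thesis .
  qed
  have meas: "(\<lambda>x. ennreal (indicator (SX B s) x * ((\<Prod>i\<in>B. x i powr (a' i - 1)) * (s - sum x B) powr (c' - 1))))
      \<in> borel_measurable (Pi\<^sub>M B (\<lambda>_. lborel))" if "finite B" for B :: "'i set" and s a' c'
  proof -
    have "(\<lambda>x. ennreal (indicator (SX B s \<inter> space (Pi\<^sub>M B (\<lambda>_. lborel))) x * ((\<Prod>i\<in>B. x i powr (a' i - 1)) * (s - sum x B) powr (c' - 1))))
      \<in> borel_measurable (Pi\<^sub>M B (\<lambda>_. lborel))"
      using SXsets[OF that] that by measurable
    thus ?thesis by (rule measurable_cong[THEN iffD1, rotated]) (auto simp: indicator_def)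
  qed
  let ?F = "\<lambda>B s c' x. ennreal (indicator (SX B s) x * ((\<Prod>i\<in>B. x i powr (a i - 1)) * (s - sum x B) powr (c' - 1)))"
  let ?h = "\<lambda>y. ennreal (indicator {0<..<t} y * y powr (a b - 1))"
  define G where "G = (\<Prod>i\<in>A. Gamma (a i)) * Gamma c / Gamma (sum a A + c)"
  have apos: "\<And>i. i \<in> A \<Longrightarrow> a i > 0" and abpos: "a b > 0" using insert.prems by auto
  have SApos: "sum a A \<ge> 0" using apos by (intro sum_nonneg) (auto simp: less_imp_le)
  have Gnn: "G \<ge> 0" unfolding G_def using apos insert.prems SApos
    by (intro divide_nonneg_pos mult_nonneg_nonneg prod_nonneg) (auto intro: Gamma_real_pos less_imp_le)
  have "(\<integral>\<^sup>+x. ?F (insert b A) t c x \<partial>Pi\<^sub>M (insert b A) (\<lambda>_. lborel))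
        = (\<integral>\<^sup>+y. \<integral>\<^sup>+x. ?F (insert b A) t c (x(b := y)) \<partial>Pi\<^sub>M A (\<lambda>_. lborel) \<partial>lborel)"
    using insert.hyps by (intro product_nn_integral_insert_rev meas) auto
  also have "\<dots> = (\<integral>\<^sup>+y. \<integral>\<^sup>+x. ?h y * ?F A (t - y) c x \<partial>Pi\<^sub>M A (\<lambda>_. lborel) \<partial>lborel)"
  proof (intro nn_integral_cong)
    fix y :: real and x :: "'i \<Rightarrow> real" assume x: "x \<in> space (Pi\<^sub>M A (\<lambda>_. lborel))"
    have bx: "b \<notin> A" by (rule insert.hyps)
    have sum_eq: "sum (x(b := y)) (insert b A) = y + sum x A"
      using insert.hyps by (auto intro!: sum.cong)
    have prod_eq: "(\<Prod>i\<in>insert b A. (x(b := y)) i powr (a i - 1)) = y powr (a b - 1) * (\<Prod>i\<in>A. x i powr (a i - 1))"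
      using insert.hyps by (auto intro!: prod.cong)
    show "?F (insert b A) t c (x(b := y)) = ?h y * ?F A (t - y) c x"
    proof (cases "0 < y \<and> x \<in> SX A (t - y)")
      case True
      hence yt: "y \<in> {0<..<t}"
        using sum_nonneg[of A x] by (auto simp: SX_def less_imp_le)
      have "x(b := y) \<in> SX (insert b A) t" using True SX_step[OF insert.hyps(2,1)] by simp
      thus ?thesis using True yt unfolding sum_eq prod_eq
        by (simp add: ennreal_mult'[symmetric] algebra_simps)
    next
      case False
      hence "x(b := y) \<notin> SX (insert b A) t" using SX_step[OF insert.hyps(2,1)] by simp
      moreover have "?h y * ?F A (t - y) c x = 0" using False by (auto simp: indicator_def)
      ultimately show ?thesis by simp
    qed
  qed
  also have "\<dots> = (\<integral>\<^sup>+y. ?h y * \<integral>\<^sup>+x. ?F A (t - y) c x \<partial>Pi\<^sub>M A (\<lambda>_. lborel) \<partial>lborel)"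
    using insert.hyps by (intro nn_integral_cong nn_integral_cmult meas)
  also have "\<dots> = (\<integral>\<^sup>+y. ennreal G * ennreal (indicator {0<..<t} y * (y powr (a b - 1) * (t - y) powr ((sum a A + c) - 1))) \<partial>lborel)"
  proof (intro nn_integral_cong)
    fix y :: real
    show "?h y * (\<integral>\<^sup>+x. ?F A (t - y) c x \<partial>Pi\<^sub>M A (\<lambda>_. lborel)) =
          ennreal G * ennreal (indicator {0<..<t} y * (y powr (a b - 1) * (t - y) powr ((sum a A + c) - 1)))"
    proof (cases "y \<in> {0<..<t}")
      case True
      have "(\<integral>\<^sup>+x. ?F A (t - y) c x \<partial>Pi\<^sub>M A (\<lambda>_. lborel)) = ennreal ((t - y) powr (sum a A + c - 1) * G)"
        unfolding G_def using True apos insert.prems by (intro insert.IH) auto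
      thus ?thesis using True Gnn by (simp add: ennreal_mult'[symmetric] mult_ac)
    qed simp
  qed
  also have "\<dots> = ennreal G * (\<integral>\<^sup>+y. ennreal (indicator {0<..<t} y * (y powr (a b - 1) * (t - y) powr ((sum a A + c) - 1))) \<partial>lborel)"
    by (rule nn_integral_cmult) auto
  also have "\<dots> = ennreal G * ennreal (t powr (a b + (sum a A + c) - 1) * Beta (a b) (sum a A + c))"
    using insert.prems SApos by (subst beta_scaled) auto
  also have "\<dots> = ennreal (t powr (sum a (insert b A) + c - 1) * ((\<Prod>i\<in>insert b A. Gamma (a i)) * Gamma c / Gamma (sum a (insert b A) + c)))"
  proof -
    have "Gamma (sum a A + c) \<noteq> 0" using SApos insert.prems by (intro less_imp_neq[symmetric] Gamma_real_pos) auto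
    hence "G * (t powr (a b + (sum a A + c) - 1) * Beta (a b) (sum a A + c)) =
          t powr (sum a (insert b A) + c - 1) * ((\<Prod>i\<in>insert b A. Gamma (a i)) * Gamma c / Gamma (sum a (insert b A) + c))"
      using insert.hyps unfolding G_def Beta_def by (simp add: field_simps)
    thus ?thesis using Gnn by (simp add: ennreal_mult'[symmetric])
  qed
  finally show ?case .
qed



definition ddens :: "nat \<Rightarrow> real \<Rightarrow> (nat \<Rightarrow> real) \<Rightarrow> ennreal" where
  "ddens n a x = ennreal (indicator {y. (\<forall>i<n-1. 0 < y i) \<and> (\<Sum>i<n-1. y i) < 1} x
             * (Gamma (real n * a) / Gamma a ^ n)
             * (\<Prod>i<n-1. x i powr (a - 1)) * (1 - (\<Sum>i<n-1. x i)) powr (a - 1))"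

definition dmap :: "nat \<Rightarrow> (nat \<Rightarrow> real) \<Rightarrow> (nat \<Rightarrow> real)" where
  "dmap n x = (\<lambda>i\<in>{..<n}. if i < n - 1 then x i else 1 - (\<Sum>j<n-1. x j))"

lemma dirichlet_sym_alt: "dirichlet_sym n a = distr (density (PiM {..<n-1} (\<lambda>_. lborel)) (ddens n a))
       (PiM {..<n} (\<lambda>_. borel)) (dmap n)"
  unfolding dirichlet_sym_def ddens_def dmap_def ..

lemma dmap_meas[measurable]: "dmap n \<in> PiM {..<n-1} (\<lambda>_. lborel) \<rightarrow>\<^sub>M PiM {..<n} (\<lambda>_. borel)"
  unfolding dmap_def
proof (rule measurable_restrict)
  fix i assume "i \<in> {..<n}"
  show "(\<lambda>x. if i < n - 1 then x i else 1 - (\<Sum>j<n - 1. x j)) \<in> borel_measurable (PiM {..<n-1} (\<lambda>_. lborel))"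
  proof (cases "i < n - 1")
    case True thus ?thesis by simp measurable
  next
    case False thus ?thesis by simp measurable
  qed
qed

lemma SX_sets: "finite I \<Longrightarrow> SX I t \<inter> space (PiM I (\<lambda>_. lborel)) \<in> sets (PiM I (\<lambda>_. lborel))"
proof -
  assume I: "finite I"
  have "SX I t \<inter> space (Pi\<^sub>M I (\<lambda>_. lborel)) =
        Pi\<^sub>E I (\<lambda>_. {0<..}) \<inter> (\<lambda>x. sum x I) -` {..<t} \<inter> space (Pi\<^sub>M I (\<lambda>_. lborel))"
    by (auto simp: SX_def space_PiM)
  also have "\<dots> \<in> sets (Pi\<^sub>M I (\<lambda>_. lborel))" using I by measurable
  finally show ?thesis .
qed

lemma Delta_eq: "{y. (\<forall>i<m. 0 < y i) \<and> (\<Sum>i<m. y i) < 1} = SX {..<m} 1"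
  by (auto simp: SX_def)

lemma ddens_alt: "ddens n a = (\<lambda>x. ennreal (indicator (SX {..<n-1} 1) x
             * (Gamma (real n * a) / Gamma a ^ n)
             * (\<Prod>i<n-1. x i powr (a - 1)) * (1 - (\<Sum>i<n-1. x i)) powr (a - 1)))"
  unfolding ddens_def Delta_eq ..

lemma ddens_meas[measurable]: "ddens n a \<in> borel_measurable (PiM {..<n-1} (\<lambda>_. lborel))"
proof -
  have S: "SX {..<n-1} 1 \<inter> space (PiM {..<n-1} (\<lambda>_. lborel)) \<in> sets (PiM {..<n-1} (\<lambda>_. lborel))"
    by (rule SX_sets) simp
  have "(\<lambda>x. ennreal (indicator (SX {..<n-1} 1 \<inter> space (PiM {..<n-1} (\<lambda>_. lborel))) x
             * (Gamma (real n * a) / Gamma a ^ n)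
             * (\<Prod>i<n-1. x i powr (a - 1)) * (1 - (\<Sum>i<n-1. x i)) powr (a - 1)))
        \<in> borel_measurable (PiM {..<n-1} (\<lambda>_. lborel))"
    using S by measurable
  thus ?thesis unfolding ddens_alt
    by (rule measurable_cong[THEN iffD1, rotated]) (simp only: indicator_def, auto)
qed

lemma nn_integral_dirichlet:
  assumes [measurable]: "f \<in> borel_measurable (PiM {..<n} (\<lambda>_. borel))"
  shows "(\<integral>\<^sup>+x. f x \<partial>dirichlet_sym n a) = (\<integral>\<^sup>+x. ddens n a x * f (dmap n x) \<partial>PiM {..<n-1} (\<lambda>_. lborel))"
proof -
  have 1: "dmap n \<in> density (PiM {..<n-1} (\<lambda>_. lborel)) (ddens n a) \<rightarrow>\<^sub>M PiM {..<n} (\<lambda>_. borel)"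
    unfolding measurable_density_eq1 by (rule dmap_meas)
  have 2: "f \<in> borel_measurable (distr (density (PiM {..<n-1} (\<lambda>_. lborel)) (ddens n a)) (PiM {..<n} (\<lambda>_. borel)) (dmap n))"
    using assms by (subst measurable_distr_eq1)
  have 3: "(\<lambda>x. f (dmap n x)) \<in> borel_measurable (PiM {..<n-1} (\<lambda>_. lborel))"
    using measurable_comp[OF dmap_meas assms] by (simp add: comp_def)
  show ?thesis unfolding dirichlet_sym_alt nn_integral_distr[OF 1 2]
    by (rule nn_integral_density[OF ddens_meas 3])
qed

lemma space_dirichlet: "space (dirichlet_sym n a) = space (PiM {..<n} (\<lambda>_. borel))"
  unfolding dirichlet_sym_alt by simp

lemma sets_dirichlet: "sets (dirichlet_sym n a) = sets (PiM {..<n} (\<lambda>_. borel))"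
  unfolding dirichlet_sym_alt by simp

lemma ddens_zero: "x \<notin> SX {..<n-1} 1 \<Longrightarrow> ddens n a x = 0"
  unfolding ddens_alt by simp

lemma dmap_pos: "x \<in> SX {..<n-1} 1 \<Longrightarrow> i < n \<Longrightarrow> 0 < dmap n x i"
  unfolding dmap_def SX_def by auto

lemma AE_dirichlet_pos:
  shows "AE x in dirichlet_sym n a. \<forall>i<n. 0 < x i"
proof -
  have "AE x in Pi\<^sub>M {..<n - 1} (\<lambda>_. lborel). 0 < ddens n a x \<longrightarrow> (\<forall>i<n. 0 < dmap n x i)"
  proof (intro AE_I2 impI allI)
    fix x i assume pos: "0 < ddens n a x" and i: "i < n"
    have "x \<in> SX {..<n-1} 1"
    proof (rule ccontr)
      assume "x \<notin> SX {..<n-1} 1"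
      hence "ddens n a x = 0" by (rule ddens_zero)
      thus False using pos by simp
    qed
    thus "0 < dmap n x i" using i by (rule dmap_pos)
  qed
  hence "AE x in density (PiM {..<n-1} (\<lambda>_. lborel)) (ddens n a). \<forall>i<n. 0 < dmap n x i"
    by (rule iffD2[OF AE_density[OF ddens_meas]])
  note AE1 = this
  have eq: "{x \<in> space (PiM {..<n} (\<lambda>_. borel)). \<forall>i<n. 0 < (x i::real)} = Pi\<^sub>E {..<n} (\<lambda>_. {0<..})"
    unfolding space_PiM by (auto simp: PiE_iff extensional_def)
  have 2: "{x \<in> space (PiM {..<n} (\<lambda>_. borel)). \<forall>i<n. 0 < (x i::real)} \<in> sets (PiM {..<n} (\<lambda>_. borel))"
    unfolding eq by (rule sets_PiM_I_finite) auto
  have 1: "dmap n \<in> density (PiM {..<n-1} (\<lambda>_. lborel)) (ddens n a) \<rightarrow>\<^sub>M PiM {..<n} (\<lambda>_. borel)"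
    unfolding measurable_density_eq1 by (rule dmap_meas)
  show ?thesis unfolding dirichlet_sym_alt AE_distr_iff[OF 1 2] by (rule AE1)
qed



lemma powr_times_pow: "(x::real) > 0 \<Longrightarrow> x powr (c - 1) * x ^ k = x powr (c + real k - 1)"
  by (simp add: powr_realpow[symmetric] powr_add[symmetric] algebra_simps)

lemma Gamma_poch: "(b::real) > 0 \<Longrightarrow> Gamma (b + real k) = pochhammer b k * Gamma b"
proof -
  assume b: "b > 0"
  hence "b \<notin> \<int>\<^sub>\<le>\<^sub>0" by (auto dest: nonpos_Ints_nonpos)
  hence "pochhammer b k = Gamma (b + real k) / Gamma b" by (rule pochhammer_Gamma)
  moreover have "Gamma b > 0" using b by (rule Gamma_real_pos)
  ultimately show ?thesis by simp
qed

lemma SX_integrand_meas[measurable]: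
  assumes "finite B"
  shows "(\<lambda>x. ennreal (indicator (SX B s) x * ((\<Prod>i\<in>B. x i powr (a' i - 1)) * (s - sum x B) powr (c' - 1))))
      \<in> borel_measurable (Pi\<^sub>M B (\<lambda>_. lborel))"
proof -
  have "(\<lambda>x. ennreal (indicator (SX B s \<inter> space (Pi\<^sub>M B (\<lambda>_. lborel))) x * ((\<Prod>i\<in>B. x i powr (a' i - 1)) * (s - sum x B) powr (c' - 1))))
    \<in> borel_measurable (Pi\<^sub>M B (\<lambda>_. lborel))"
    using SX_sets[OF assms] assms by measurable
  thus ?thesis by (rule measurable_cong[THEN iffD1, rotated]) (auto simp: indicator_def)
qed

lemma dirichlet_moment:
  assumes n: "n \<ge> 1" and b: "b > 0"
  shows "(\<integral>\<^sup>+x. ennreal (\<Prod>i<n. x i ^ kk i) \<partial>dirichlet_sym n b)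
         = ennreal ((\<Prod>i<n. pochhammer b (kk i)) / pochhammer (real n * b) (\<Sum>i<n. kk i))"
proof -
  obtain m where nm: "n = Suc m" using n by (cases n) auto
  define K where "K = Gamma (real n * b) / Gamma b ^ n"
  have Kpos: "K > 0" unfolding K_def using b n by (auto intro!: divide_pos_pos Gamma_real_pos)
  have "(\<integral>\<^sup>+x. ennreal (\<Prod>i<n. x i ^ kk i) \<partial>dirichlet_sym n b)
      = (\<integral>\<^sup>+x. ddens n b x * ennreal (\<Prod>i<n. dmap n x i ^ kk i) \<partial>PiM {..<n-1} (\<lambda>_. lborel))"
    by (rule nn_integral_dirichlet) measurable
  also have "\<dots> = (\<integral>\<^sup>+x. ennreal K * ennreal (indicator (SX {..<m} 1) x *
        ((\<Prod>i\<in>{..<m}. x i powr ((b + real (kk i)) - 1)) * (1 - sum x {..<m}) powr ((b + real (kk m)) - 1)))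
        \<partial>PiM {..<m} (\<lambda>_. lborel))"
  proof (unfold nm diff_Suc_1, intro nn_integral_cong)
    fix x :: "nat \<Rightarrow> real"
    show "ddens (Suc m) b x * ennreal (\<Prod>i<Suc m. dmap (Suc m) x i ^ kk i) =
          ennreal K * ennreal (indicator (SX {..<m} 1) x *
          ((\<Prod>i\<in>{..<m}. x i powr ((b + real (kk i)) - 1)) * (1 - sum x {..<m}) powr ((b + real (kk m)) - 1)))"
    proof (cases "x \<in> SX {..<m} 1")
      case False
      thus ?thesis using ddens_zero[of x "Suc m" b] by simp
    next
      case True
      hence xpos: "\<And>i. i < m \<Longrightarrow> x i > 0" and s: "sum x {..<m} < 1" by (auto simp: SX_def)
      have dm: "(\<Prod>i<Suc m. dmap (Suc m) x i ^ kk i) = (\<Prod>i<m. x i ^ kk i) * (1 - sum x {..<m}) ^ kk m"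
        by (simp add: dmap_def prod.lessThan_Suc)
      have "(\<Prod>i<m. x i powr (b - 1)) * (\<Prod>i<m. x i ^ kk i) = (\<Prod>i<m. x i powr ((b + real (kk i)) - 1))"
        unfolding prod.distrib[symmetric] using xpos by (intro prod.cong) (auto simp: powr_times_pow)
      moreover have "(1 - sum x {..<m}) powr (b - 1) * (1 - sum x {..<m}) ^ kk m = (1 - sum x {..<m}) powr ((b + real (kk m)) - 1)"
        using s by (simp add: powr_times_pow)
      ultimately have eq: "K * (\<Prod>i<m. x i powr (b - 1)) * (1 - sum x {..<m}) powr (b - 1) * ((\<Prod>i<m. x i ^ kk i) * (1 - sum x {..<m}) ^ kk m)
            = K * ((\<Prod>i<m. x i powr ((b + real (kk i)) - 1)) * (1 - sum x {..<m}) powr ((b + real (kk m)) - 1))"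
        by (metis (no_types, lifting) mult.assoc mult.left_commute)
      have nn1: "K * (\<Prod>i<m. x i powr (b - 1)) * (1 - sum x {..<m}) powr (b - 1) \<ge> 0"
        using Kpos by (auto intro!: mult_nonneg_nonneg prod_nonneg)
      have nn2: "(\<Prod>i<m. x i ^ kk i) * (1 - sum x {..<m}) ^ kk m \<ge> 0"
      proof -
        have "(\<Prod>i<m. x i ^ kk i) \<ge> 0" using xpos by (intro prod_nonneg) (auto intro: less_imp_le)
        moreover have "(1 - sum x {..<m}) ^ kk m \<ge> 0" using s by simp
        ultimately show ?thesis by simp
      qed
      have dd: "ddens (Suc m) b x = ennreal (K * (\<Prod>i<m. x i powr (b - 1)) * (1 - sum x {..<m}) powr (b - 1))"
        using True unfolding ddens_alt K_def nm by simp
      show ?thesis using True unfolding dd dm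
        by (simp add: ennreal_mult[symmetric] nn1 nn2 eq) (simp add: ennreal_mult' Kpos less_imp_le)
    qed
  qed
  also have "\<dots> = ennreal K * (\<integral>\<^sup>+x. ennreal (indicator (SX {..<m} 1) x *
        ((\<Prod>i\<in>{..<m}. x i powr ((b + real (kk i)) - 1)) * (1 - sum x {..<m}) powr ((b + real (kk m)) - 1)))
        \<partial>PiM {..<m} (\<lambda>_. lborel))"
    by (rule nn_integral_cmult) (rule SX_integrand_meas[where a'="\<lambda>i. b + real (kk i)" and c'="b + real (kk m)", simplified], simp)
  also have "\<dots> = ennreal K * ennreal (1 powr (sum (\<lambda>i. b + real (kk i)) {..<m} + (b + real (kk m)) - 1) *
      ((\<Prod>i\<in>{..<m}. Gamma (b + real (kk i))) * Gamma (b + real (kk m)) / Gamma (sum (\<lambda>i. b + real (kk i)) {..<m} + (b + real (kk m)))))"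
    using b by (subst dirichlet_integral) auto
  also have "\<dots> = ennreal ((\<Prod>i<n. pochhammer b (kk i)) / pochhammer (real n * b) (\<Sum>i<n. kk i))"
  proof -
    have s1: "sum (\<lambda>i. b + real (kk i)) {..<m} + (b + real (kk m)) = real n * b + real (\<Sum>i<n. kk i)"
      unfolding nm by (simp add: sum.distrib sum.lessThan_Suc algebra_simps)
    have p1: "(\<Prod>i\<in>{..<m}. Gamma (b + real (kk i))) * Gamma (b + real (kk m)) = (\<Prod>i<n. pochhammer b (kk i)) * Gamma b ^ n"
    proof -
      have "(\<Prod>i\<in>{..<m}. Gamma (b + real (kk i))) * Gamma (b + real (kk m)) = (\<Prod>i<n. Gamma (b + real (kk i)))"
        unfolding nm by (simp add: prod.lessThan_Suc)
      also have "\<dots> = (\<Prod>i<n. pochhammer b (kk i) * Gamma b)" using b by (simp add: Gamma_poch)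
      also have "\<dots> = (\<Prod>i<n. pochhammer b (kk i)) * Gamma b ^ n" by (simp add: prod.distrib)
      finally show ?thesis .
    qed
    have g1: "Gamma (real n * b + real (\<Sum>i<n. kk i)) = pochhammer (real n * b) (\<Sum>i<n. kk i) * Gamma (real n * b)"
      using b n by (intro Gamma_poch) auto
    have Gb: "Gamma b > 0" using b by (rule Gamma_real_pos)
    have Gnb: "Gamma (real n * b) > 0" using b n by (intro Gamma_real_pos) auto
    have pp: "pochhammer (real n * b) (\<Sum>i<n. kk i) > 0" using b n by (intro pochhammer_pos) auto
    have "K * (1 powr (sum (\<lambda>i. b + real (kk i)) {..<m} + (b + real (kk m)) - 1) *
      ((\<Prod>i\<in>{..<m}. Gamma (b + real (kk i))) * Gamma (b + real (kk m)) / Gamma (sum (\<lambda>i. b + real (kk i)) {..<m} + (b + real (kk m)))))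
      = (\<Prod>i<n. pochhammer b (kk i)) / pochhammer (real n * b) (\<Sum>i<n. kk i)"
      unfolding s1 p1 g1 K_def using Gb Gnb pp by (simp add: field_simps)
    hence "ennreal K * ennreal (1 powr (sum (\<lambda>i. b + real (kk i)) {..<m} + (b + real (kk m)) - 1) *
      ((\<Prod>i\<in>{..<m}. Gamma (b + real (kk i))) * Gamma (b + real (kk m)) / Gamma (sum (\<lambda>i. b + real (kk i)) {..<m} + (b + real (kk m)))))
      = ennreal ((\<Prod>i<n. pochhammer b (kk i)) / pochhammer (real n * b) (\<Sum>i<n. kk i))"
      using Kpos by (subst ennreal_mult'[symmetric]) auto
    thus ?thesis .
  qed
  finally show ?thesis .
qed



lemma prod_upd_Suc:
  fixes x :: "nat \<Rightarrow> real"
  assumes "finite I" "a \<in> I"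
  shows "(\<Prod>i\<in>I. x i ^ (kk(a := Suc (kk a))) i) = x a * (\<Prod>i\<in>I. x i ^ kk i)"
proof -
  have "(\<Prod>i\<in>I. x i ^ (kk(a := Suc (kk a))) i) = x a ^ Suc (kk a) * (\<Prod>i\<in>I - {a}. x i ^ (kk(a := Suc (kk a))) i)"
    using assms by (subst prod.remove[of _ a]) auto
  also have "(\<Prod>i\<in>I - {a}. x i ^ (kk(a := Suc (kk a))) i) = (\<Prod>i\<in>I - {a}. x i ^ kk i)"
    by (intro prod.cong) auto
  also have "x a ^ Suc (kk a) * \<dots> = x a * (x a ^ kk a * (\<Prod>i\<in>I - {a}. x i ^ kk i))" by simp
  also have "x a ^ kk a * (\<Prod>i\<in>I - {a}. x i ^ kk i) = (\<Prod>i\<in>I. x i ^ kk i)"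
    using assms by (subst prod.remove[of _ a, symmetric]) auto
  finally show ?thesis .
qed

lemma prod_poch_upd:
  fixes b :: real
  assumes "finite I" "a \<in> I"
  shows "(\<Prod>i\<in>I. pochhammer b ((kk(a := Suc (kk a))) i)) = (b + real (kk a)) * (\<Prod>i\<in>I. pochhammer b (kk i))"
proof -
  have "(\<Prod>i\<in>I. pochhammer b ((kk(a := Suc (kk a))) i)) = pochhammer b (Suc (kk a)) * (\<Prod>i\<in>I - {a}. pochhammer b ((kk(a := Suc (kk a))) i))"
    using assms by (subst prod.remove[of _ a]) auto
  also have "(\<Prod>i\<in>I - {a}. pochhammer b ((kk(a := Suc (kk a))) i)) = (\<Prod>i\<in>I - {a}. pochhammer b (kk i))"
    by (intro prod.cong) auto
  also have "pochhammer b (Suc (kk a)) = (b + real (kk a)) * pochhammer b (kk a)" by (simp add: pochhammer_rec')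
  also have "(b + real (kk a)) * pochhammer b (kk a) * (\<Prod>i\<in>I - {a}. pochhammer b (kk i)) = (b + real (kk a)) * (\<Prod>i\<in>I. pochhammer b (kk i))"
    using assms by (subst (2) prod.remove[of _ a]) auto
  finally show ?thesis .
qed

lemma sum_upd_Suc:
  assumes "finite I" "a \<in> I"
  shows "(\<Sum>i\<in>I. (kk(a := Suc (kk a))) i) = Suc (\<Sum>i\<in>I. kk i)"
proof -
  have "(\<Sum>i\<in>I. (kk(a := Suc (kk a))) i) = Suc (kk a) + (\<Sum>i\<in>I - {a}. (kk(a := Suc (kk a))) i)"
    using assms by (subst sum.remove[of _ a]) auto
  also have "(\<Sum>i\<in>I - {a}. (kk(a := Suc (kk a))) i) = (\<Sum>i\<in>I - {a}. kk i)"
    by (intro sum.cong) auto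
  also have "Suc (kk a) + (\<Sum>i\<in>I - {a}. kk i) = Suc (kk a + (\<Sum>i\<in>I - {a}. kk i))" by simp
  also have "kk a + (\<Sum>i\<in>I - {a}. kk i) = (\<Sum>i\<in>I. kk i)"
    using assms by (subst sum.remove[of _ a, symmetric]) auto
  finally show ?thesis .
qed

lemma meas_dirichlet: "f \<in> borel_measurable (PiM {..<n} (\<lambda>_. borel)) \<Longrightarrow> f \<in> borel_measurable (dirichlet_sym n a)"
  using measurable_cong_sets[OF sets_dirichlet[symmetric] refl] by blast

lemma sum_sub_meas[measurable]:
  "A \<subseteq> {..<n} \<Longrightarrow> (\<lambda>x. \<Sum>i\<in>A. x i :: real) \<in> borel_measurable (PiM {..<n} (\<lambda>_. borel))"
  by (rule borel_measurable_sum) auto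

lemma dirichlet_moment_sum:
  assumes n: "n \<ge> 1" and b: "b > 0" and A: "A \<subseteq> {..<n}"
  shows "(\<integral>\<^sup>+x. ennreal ((\<Prod>i<n. x i ^ kk i) * (\<Sum>i\<in>A. x i) ^ j) \<partial>dirichlet_sym n b)
       = ennreal ((\<Prod>i<n. pochhammer b (kk i)) * pochhammer (real (card A) * b + real (\<Sum>i\<in>A. kk i)) j
                  / pochhammer (real n * b) ((\<Sum>i<n. kk i) + j))"
proof (induction j arbitrary: kk)
  case 0
  show ?case using dirichlet_moment[OF n b, of kk] by simp
next
  case (Suc j kk)
  have finA: "finite A" using A finite_subset by blast
  let ?k = "\<lambda>a. kk(a := Suc (kk a))"
  have "(\<integral>\<^sup>+x. ennreal ((\<Prod>i<n. x i ^ kk i) * (\<Sum>i\<in>A. x i) ^ Suc j) \<partial>dirichlet_sym n b)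
      = (\<integral>\<^sup>+x. (\<Sum>a\<in>A. ennreal ((\<Prod>i<n. x i ^ ?k a i) * (\<Sum>i\<in>A. x i) ^ j)) \<partial>dirichlet_sym n b)"
  proof (rule nn_integral_cong_AE)
    show "AE x in dirichlet_sym n b. ennreal ((\<Prod>i<n. x i ^ kk i) * (\<Sum>i\<in>A. x i) ^ Suc j) =
        (\<Sum>a\<in>A. ennreal ((\<Prod>i<n. x i ^ ?k a i) * (\<Sum>i\<in>A. x i) ^ j))"
      using AE_dirichlet_pos[of n b]
    proof eventually_elim
      case (elim x)
      have nn: "(\<Prod>i<n. x i ^ ?k a i) * (\<Sum>i\<in>A. x i) ^ j \<ge> 0" for a
      proof -
        have "(\<Prod>i<n. x i ^ ?k a i) \<ge> 0" using elim by (intro prod_nonneg) (auto intro: less_imp_le)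
        moreover have "(\<Sum>i\<in>A. x i) \<ge> 0" using elim A by (intro sum_nonneg) (auto intro: less_imp_le)
        ultimately show ?thesis by simp
      qed
      have "(\<Prod>i<n. x i ^ kk i) * (\<Sum>i\<in>A. x i) ^ Suc j = (\<Sum>a\<in>A. x a * (\<Prod>i<n. x i ^ kk i)) * (\<Sum>i\<in>A. x i) ^ j"
        by (simp add: sum_distrib_right sum_distrib_left mult_ac)
      also have "\<dots> = (\<Sum>a\<in>A. (\<Prod>i<n. x i ^ ?k a i) * (\<Sum>i\<in>A. x i) ^ j)"
        unfolding sum_distrib_right
      proof (intro sum.cong refl)
        fix a assume "a \<in> A"
        hence "a \<in> {..<n}" using A by auto
        from prod_upd_Suc[OF _ this, of x kk]
        show "x a * (\<Prod>i<n. x i ^ kk i) * (\<Sum>i\<in>A. x i) ^ j = (\<Prod>i<n. x i ^ ?k a i) * (\<Sum>i\<in>A. x i) ^ j"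
          by simp
      qed
      finally show ?case using nn by (simp add: sum_ennreal)
    qed
  qed
  also have "\<dots> = (\<Sum>a\<in>A. \<integral>\<^sup>+x. ennreal ((\<Prod>i<n. x i ^ ?k a i) * (\<Sum>i\<in>A. x i) ^ j) \<partial>dirichlet_sym n b)"
  proof (rule nn_integral_sum)
    fix a
    have [measurable]: "(\<lambda>x. \<Sum>i\<in>A. x i :: real) \<in> borel_measurable (PiM {..<n} (\<lambda>_. borel))"
      using A by (rule sum_sub_meas)
    show "(\<lambda>x. ennreal ((\<Prod>i<n. x i ^ ?k a i) * (\<Sum>i\<in>A. x i) ^ j)) \<in> borel_measurable (dirichlet_sym n b)"
      by (rule meas_dirichlet) measurable
  qed
  also have "\<dots> = (\<Sum>a\<in>A. ennreal ((\<Prod>i<n. pochhammer b (?k a i)) * pochhammer (real (card A) * b + real (\<Sum>i\<in>A. ?k a i)) j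
                  / pochhammer (real n * b) ((\<Sum>i<n. ?k a i) + j)))"
    by (intro sum.cong refl Suc.IH)
  also have "\<dots> = ennreal ((\<Prod>i<n. pochhammer b (kk i)) * pochhammer (real (card A) * b + real (\<Sum>i\<in>A. kk i)) (Suc j)
                  / pochhammer (real n * b) ((\<Sum>i<n. kk i) + Suc j))"
  proof -
    define P where "P = (\<Prod>i<n. pochhammer b (kk i))"
    define KA where "KA = (\<Sum>i\<in>A. kk i)"
    define Q where "Q = pochhammer (real (card A) * b + real KA + 1) j / pochhammer (real n * b) ((\<Sum>i<n. kk i) + Suc j)"
    have Pnn: "P \<ge> 0" unfolding P_def using b by (intro prod_nonneg pochhammer_nonneg) auto
    have Qnn: "Q \<ge> 0" unfolding Q_def using b n by (intro divide_nonneg_nonneg pochhammer_nonneg) (auto intro!: add_pos_nonneg add_nonneg_pos)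
    have trm: "(\<Prod>i<n. pochhammer b (?k a i)) * pochhammer (real (card A) * b + real (\<Sum>i\<in>A. ?k a i)) j
                  / pochhammer (real n * b) ((\<Sum>i<n. ?k a i) + j) = (b + real (kk a)) * P * Q" if "a \<in> A" for a
    proof -
      have an: "a \<in> {..<n}" using that A by auto
      show ?thesis unfolding P_def Q_def KA_def
        using prod_poch_upd[OF _ an, of b kk] sum_upd_Suc[OF _ an, of kk] sum_upd_Suc[OF finA that, of kk]
        by (simp add: algebra_simps)
    qed
    have "(\<Sum>a\<in>A. ennreal ((\<Prod>i<n. pochhammer b (?k a i)) * pochhammer (real (card A) * b + real (\<Sum>i\<in>A. ?k a i)) j
                  / pochhammer (real n * b) ((\<Sum>i<n. ?k a i) + j))) = (\<Sum>a\<in>A. ennreal ((b + real (kk a)) * P * Q))"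
      by (intro sum.cong refl arg_cong[where f=ennreal] trm)
    also have "\<dots> = ennreal (\<Sum>a\<in>A. (b + real (kk a)) * P * Q)"
      using b Pnn Qnn by (intro sum_ennreal) auto
    also have "(\<Sum>a\<in>A. (b + real (kk a)) * P * Q) = (real (card A) * b + real KA) * P * Q"
      unfolding KA_def by (simp add: sum_distrib_right[symmetric] sum.distrib)
    also have "\<dots> = P * pochhammer (real (card A) * b + real KA) (Suc j) / pochhammer (real n * b) ((\<Sum>i<n. kk i) + Suc j)"
      unfolding Q_def by (simp add: pochhammer_rec add_ac)
    finally show ?thesis unfolding P_def KA_def .
  qed
  finally show ?case .
qed



lemma poch4_identity:
  fixes a s :: real
  assumes s: "s > 0"
  shows "pochhammer a 4 / pochhammer s 4 - 4 * (a/s) * (pochhammer a 3 / pochhammer s 3)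
        + 6 * (a/s)^2 * (pochhammer a 2 / pochhammer s 2) - 3 * (a/s)^4
        = 3 * a * (s - a) * (a * (s - a) * (s - 6) + 2 * s^2) / (s^4 * (s+1) * (s+2) * (s+3))"
proof -
  have p2: "pochhammer x 2 = x * (x+1)" for x :: real by (simp add: numeral_2_eq_2 pochhammer_Suc)
  have p3: "pochhammer x 3 = x * (x+1) * (x+2)" for x :: real by (simp add: numeral_3_eq_3 pochhammer_Suc)
  have p4: "pochhammer x 4 = x * (x+1) * (x+2) * (x+3)" for x :: real
    by (simp add: pochhammer_Suc eval_nat_numeral algebra_simps)
  define u where "u = s + 1"
  define v where "v = s + 2"
  define w where "w = s + 3"
  have nz: "s \<noteq> 0" "u \<noteq> 0" "v \<noteq> 0" "w \<noteq> 0" using s by (auto simp: u_def v_def w_def)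
  have "pochhammer a 4 / pochhammer s 4 - 4 * (a/s) * (pochhammer a 3 / pochhammer s 3)
        + 6 * (a/s)^2 * (pochhammer a 2 / pochhammer s 2) - 3 * (a/s)^4
      = a * (a+1) * (a+2) * (a+3) / (s * u * v * w) - 4 * (a/s) * (a * (a+1) * (a+2) / (s * u * v))
        + 6 * (a/s)^2 * (a * (a+1) / (s * u)) - 3 * (a/s)^4"
    unfolding p2 p3 p4 u_def v_def w_def by (simp add: add_ac)
  also have "\<dots> = (a * (a+1) * (a+2) * (a+3) * s^3 - 4 * a * (a * (a+1) * (a+2)) * s^2 * w
        + 6 * a^2 * (a * (a+1)) * s * v * w - 3 * a^4 * u * v * w) / (s^4 * u * v * w)"
    using nz by (simp add: field_simps) algebra
  also have "a * (a+1) * (a+2) * (a+3) * s^3 - 4 * a * (a * (a+1) * (a+2)) * s^2 * w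
        + 6 * a^2 * (a * (a+1)) * s * v * w - 3 * a^4 * u * v * w = 3 * a * (s - a) * (a * (s - a) * (s - 6) + 2 * s^2)"
    unfolding u_def v_def w_def by algebra
  finally show ?thesis unfolding u_def v_def w_def by (simp add: mult_ac)
qed

lemma mu4_bound:
  fixes a s :: real
  assumes s: "s \<ge> 1" and a0: "0 \<le> a" and as: "a \<le> s"
  shows "3 * a * (s - a) * (a * (s - a) * (s - 6) + 2 * s^2) / (s^4 * (s+1) * (s+2) * (s+3)) \<le> 2 / s^2"
proof -
  define q where "q = a * (s - a)"
  have q0: "0 \<le> q" unfolding q_def using a0 as by simp
  have q1: "q \<le> s^2 / 4" unfolding q_def using sum_squares_ge_zero[of "s - 2*a" 0]
    by (simp add: power2_eq_square algebra_simps)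
  have "q * (q * (s - 6) + 2 * s^2) \<le> q * (q * s + 2 * s^2)"
    using q0 by (intro mult_left_mono) (auto simp: algebra_simps)
  also have "\<dots> \<le> (s^2/4) * (q * s + 2 * s^2)"
    using q0 q1 s by (intro mult_right_mono) auto
  also have "\<dots> \<le> (s^2/4) * ((s^2/4) * s + 2 * s^2)"
    using q0 q1 s by (intro mult_left_mono add_right_mono mult_right_mono) auto
  finally have N0: "3 * (q * (q * (s - 6) + 2 * s^2)) \<le> 3 * ((s^2/4) * ((s^2/4) * s + 2 * s^2))"
    by simp
  have "3 * a * (s - a) * (a * (s - a) * (s - 6) + 2 * s^2) = 3 * (q * (q * (s - 6) + 2 * s^2))"
    unfolding q_def by (simp add: algebra_simps)
  with N0 have N: "3 * a * (s - a) * (a * (s - a) * (s - 6) + 2 * s^2) \<le> 3 * ((s^2/4) * ((s^2/4) * s + 2 * s^2))"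
    by linarith
  have Dpos: "s^4 * (s+1) * (s+2) * (s+3) > 0" using s by simp
  have key: "3 * ((s^2/4) * ((s^2/4) * s + 2 * s^2)) * s^2 \<le> 2 * (s^4 * (s+1) * (s+2) * (s+3))"
  proof -
    have "3 * ((s^2/4) * ((s^2/4) * s + 2 * s^2)) * s^2 = s^4 * (3/16 * s^3 + 3/2 * s^2)"
      by (simp add: algebra_simps power2_eq_square power4_eq_xxxx power3_eq_cube)
    also have "\<dots> \<le> s^4 * (2 * ((s+1) * (s+2) * (s+3)))"
    proof (intro mult_left_mono)
      have e: "(s+1) * (s+2) * (s+3) = s^3 + 6 * s^2 + 11 * s + 6"
        by (simp add: algebra_simps power2_eq_square power3_eq_cube)
      have h1: "3/16 * s^3 \<le> 2 * s^3" and h2: "3/2 * s^2 \<le> 12 * s^2" using s by auto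
      have "2 * (s^3 + 6 * s^2 + 11 * s + 6) = 2 * s^3 + 12 * s^2 + 22 * s + 12" by simp
      hence "3/16 * s^3 + 3/2 * s^2 \<le> 2 * (s^3 + 6 * s^2 + 11 * s + 6)" using h1 h2 s by linarith
      thus "3/16 * s^3 + 3/2 * s^2 \<le> 2 * ((s+1) * (s+2) * (s+3))" unfolding e .
    qed simp
    finally show ?thesis by (simp add: mult_ac)
  qed
  have "3 * a * (s - a) * (a * (s - a) * (s - 6) + 2 * s^2) * s^2 \<le> 2 * (s^4 * (s+1) * (s+2) * (s+3))"
    by (rule order_trans[OF mult_right_mono[OF N] key]) simp
  thus ?thesis using Dpos s by (simp add: divide_le_eq field_simps)
qed



lemma dirichlet_moment_S:
  assumes n: "n \<ge> 1" and b: "b > 0" and A: "A \<subseteq> {..<n}" and c: "c \<ge> 0"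
  shows "(\<integral>\<^sup>+x. ennreal (c * (\<Sum>i\<in>A. x i) ^ j) \<partial>dirichlet_sym n b)
       = ennreal (c * (pochhammer (real (card A) * b) j / pochhammer (real n * b) j))"
proof -
  have [measurable]: "(\<lambda>x. \<Sum>i\<in>A. x i :: real) \<in> borel_measurable (PiM {..<n} (\<lambda>_. borel))"
    using A by (rule sum_sub_meas)
  have "(\<integral>\<^sup>+x. ennreal (c * (\<Sum>i\<in>A. x i) ^ j) \<partial>dirichlet_sym n b)
      = (\<integral>\<^sup>+x. ennreal c * ennreal ((\<Prod>i<n. x i ^ (\<lambda>_. 0::nat) i) * (\<Sum>i\<in>A. x i) ^ j) \<partial>dirichlet_sym n b)"
    using c by (intro nn_integral_cong) (simp add: ennreal_mult')
  also have "\<dots> = ennreal c * (\<integral>\<^sup>+x. ennreal ((\<Prod>i<n. x i ^ (\<lambda>_. 0::nat) i) * (\<Sum>i\<in>A. x i) ^ j) \<partial>dirichlet_sym n b)"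
    by (rule nn_integral_cmult, rule meas_dirichlet) measurable
  also note dirichlet_moment_sum[OF n b A, of "\<lambda>_. 0" j]
  also have "ennreal ((\<Prod>i<n. pochhammer b ((\<lambda>_. 0::nat) i)) * pochhammer (real (card A) * b + real (\<Sum>i\<in>A. (\<lambda>_. 0::nat) i)) j
                  / pochhammer (real n * b) ((\<Sum>i<n. (\<lambda>_. 0::nat) i) + j))
           = ennreal (pochhammer (real (card A) * b) j / pochhammer (real n * b) j)" by simp
  also have "ennreal c * \<dots> = ennreal (c * (pochhammer (real (card A) * b) j / pochhammer (real n * b) j))"
    by (rule ennreal_mult'[OF c, symmetric])
  finally show ?thesis .
qed

lemma dirichlet_tail:
  assumes n: "n \<ge> 1" and b: "b > 0" and A: "A \<subseteq> {..<n}" and d: "\<delta> > 0" and s1: "real n * b \<ge> 1"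
  shows "measure (dirichlet_sym n b) {x \<in> space (dirichlet_sym n b). \<delta> < \<bar>real (card A) / real n - (\<Sum>i\<in>A. x i)\<bar>}
         \<le> 2 / (\<delta>^4 * (real n * b)^2)"
proof -
  define D where "D = dirichlet_sym n b"
  define S where "S = (\<lambda>x::nat \<Rightarrow> real. \<Sum>i\<in>A. x i)"
  define a where "a = real (card A) * b"
  define s where "s = real n * b"
  define p where "p = real (card A) / real n"
  define m where "m = (\<lambda>j. pochhammer a j / pochhammer s j)"
  have spos: "s > 0" unfolding s_def using n b by auto
  have pa: "p = a / s" unfolding p_def a_def s_def using b by simp
  have p0: "p \<ge> 0" unfolding p_def by simp
  have a0: "a \<ge> 0" unfolding a_def using b by simp
  have as: "a \<le> s" unfolding a_def s_def using b card_mono[OF _ A] by (simp add: mult_right_mono)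
  have m_nn: "m j \<ge> 0" for j unfolding m_def using a0 spos
    by (intro divide_nonneg_nonneg) (auto simp: pochhammer_prod intro!: prod_nonneg)
  have m0: "m 0 = 1" unfolding m_def by simp
  have m1: "m 1 = p" unfolding m_def pa by simp
  have Smeas[measurable]: "S \<in> borel_measurable (PiM {..<n} (\<lambda>_. borel))"
    unfolding S_def using A by (rule sum_sub_meas)
  have SmeasD[measurable]: "S \<in> borel_measurable D"
    unfolding D_def by (rule meas_dirichlet) (rule Smeas)
  have mom: "(\<integral>\<^sup>+x. ennreal (c * S x ^ j) \<partial>D) = ennreal (c * m j)" if "c \<ge> 0" for c j
    unfolding D_def S_def m_def a_def s_def using dirichlet_moment_S[OF n b A that] .
  define I where "I = (\<integral>\<^sup>+x. ennreal ((S x - p)^4) \<partial>D)"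
  have H0: "I + ennreal (4 * p * m 3) + ennreal (4 * p^3 * m 1) = ennreal (1 * m 4) + ennreal (6 * p^2 * m 2) + ennreal (p^4 * m 0)"
  proof -
    have "I + ennreal (4 * p * m 3) + ennreal (4 * p^3 * m 1)
        = (\<integral>\<^sup>+x. ennreal ((S x - p)^4) \<partial>D) + (\<integral>\<^sup>+x. ennreal ((4 * p) * S x ^ 3) \<partial>D) + (\<integral>\<^sup>+x. ennreal ((4 * p^3) * S x ^ 1) \<partial>D)"
    proof -
      have e1: "(\<integral>\<^sup>+x. ennreal ((4 * p) * S x ^ 3) \<partial>D) = ennreal (4 * p * m 3)" using p0 by (intro mom) simp
      have e2: "(\<integral>\<^sup>+x. ennreal ((4 * p^3) * S x ^ 1) \<partial>D) = ennreal (4 * p^3 * m 1)" using p0 by (intro mom) simp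
      show ?thesis unfolding I_def e1 e2 ..
    qed
    also have "\<dots> = (\<integral>\<^sup>+x. ennreal ((S x - p)^4) + ennreal ((4 * p) * S x ^ 3) + ennreal ((4 * p^3) * S x ^ 1) \<partial>D)"
      by (simp add: nn_integral_add)
    also have "\<dots> = (\<integral>\<^sup>+x. ennreal (1 * S x ^ 4) + ennreal ((6 * p^2) * S x ^ 2) + ennreal (p^4 * S x ^ 0) \<partial>D)"
    proof (rule nn_integral_cong_AE)
      have "AE x in D. \<forall>i<n. 0 < x i" unfolding D_def by (rule AE_dirichlet_pos)
      thus "AE x in D. ennreal ((S x - p)^4) + ennreal ((4 * p) * S x ^ 3) + ennreal ((4 * p^3) * S x ^ 1) =
            ennreal (1 * S x ^ 4) + ennreal ((6 * p^2) * S x ^ 2) + ennreal (p^4 * S x ^ 0)"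
      proof eventually_elim
        case (elim x)
        have S0: "S x \<ge> 0" unfolding S_def using elim A by (intro sum_nonneg) (auto intro: less_imp_le)
        have "(S x - p)^4 + (4 * p) * S x ^ 3 + (4 * p^3) * S x ^ 1 = 1 * S x ^ 4 + (6 * p^2) * S x ^ 2 + p^4 * S x ^ 0"
          by (simp add: algebra_simps power2_eq_square power4_eq_xxxx power3_eq_cube)
        moreover have "(4 * p) * S x ^ 3 \<ge> 0" "(4 * p^3) * S x ^ 1 \<ge> 0" "(6 * p^2) * S x ^ 2 \<ge> 0"
          using S0 p0 by auto
        ultimately show ?case using S0 p0
          by (simp add: ennreal_plus[symmetric] del: ennreal_plus)
      qed
    qed
    also have "\<dots> = ennreal (1 * m 4) + ennreal (6 * p^2 * m 2) + ennreal (p^4 * m 0)"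
    proof -
      have e1: "(\<integral>\<^sup>+x. ennreal (1 * S x ^ 4) \<partial>D) = ennreal (1 * m 4)" by (intro mom) simp
      have e2: "(\<integral>\<^sup>+x. ennreal ((6 * p^2) * S x ^ 2) \<partial>D) = ennreal (6 * p^2 * m 2)" by (intro mom) simp
      have e3: "(\<integral>\<^sup>+x. ennreal (p^4 * S x ^ 0) \<partial>D) = ennreal (p^4 * m 0)" using p0 by (intro mom) simp
      show ?thesis by (subst nn_integral_add, simp, simp)+ (simp only: e1 e2 e3)
    qed
    finally show ?thesis .
  qed
  define \<mu> where "\<mu> = m 4 + 6 * p^2 * m 2 + p^4 - 4 * p * m 3 - 4 * p^3 * m 1"
  have mu0: "\<mu> \<ge> 0" and I_eq: "I = ennreal \<mu>"
  proof -
    define U where "U = 4 * p * m 3 + 4 * p^3 * m 1"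
    define V where "V = m 4 + 6 * p^2 * m 2 + p^4"
    have U0: "U \<ge> 0" unfolding U_def using p0 m_nn by simp
    have V0: "V \<ge> 0" unfolding V_def using p0 m_nn by simp
    have "ennreal (4 * p * m 3) + ennreal (4 * p^3 * m 1) = ennreal U"
      unfolding U_def using p0 m_nn by (intro ennreal_plus[symmetric]) auto
    moreover have "ennreal (1 * m 4) + ennreal (6 * p^2 * m 2) + ennreal (p^4 * m 0) = ennreal V"
      unfolding V_def m0 using p0 m_nn by (simp add: ennreal_plus[symmetric] del: ennreal_plus)
    ultimately have H: "I + ennreal U = ennreal V" using H0 by (simp add: add.assoc)
    have "I \<le> ennreal V" unfolding H[symmetric] by simp
    hence fin: "I < top" using order.strict_trans1[of I "ennreal V" top] by simp
    define r where "r = enn2real I"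
    have Ir: "I = ennreal r" unfolding r_def using fin by simp
    have r0: "r \<ge> 0" unfolding r_def by simp
    have "ennreal (r + U) = ennreal V" using H Ir r0 U0 by (simp add: ennreal_plus)
    hence "r + U = V" using r0 U0 V0 ennreal_inj[of "r+U" V] by (simp del: ennreal_plus)
    hence "r = \<mu>" unfolding \<mu>_def U_def V_def by simp
    thus "\<mu> \<ge> 0" "I = ennreal \<mu>" using r0 Ir by auto
  qed
  have mu_eq: "\<mu> = 3 * a * (s - a) * (a * (s - a) * (s - 6) + 2 * s^2) / (s^4 * (s+1) * (s+2) * (s+3))"
    unfolding \<mu>_def m1 using poch4_identity[OF spos, of a] unfolding m_def pa
    by (simp add: algebra_simps power4_eq_xxxx power3_eq_cube)
  have mu_le: "\<mu> \<le> 2 / s^2" unfolding mu_eq using s1 a0 as unfolding s_def by (intro mu4_bound) auto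
  have "emeasure D {x \<in> space D. \<delta> < \<bar>p - S x\<bar>} \<le> emeasure D {x \<in> space D. 1 \<le> ennreal (1/\<delta>^4) * ennreal ((S x - p)^4)}"
  proof (rule emeasure_mono)
    show "{x \<in> space D. \<delta> < \<bar>p - S x\<bar>} \<subseteq> {x \<in> space D. 1 \<le> ennreal (1/\<delta>^4) * ennreal ((S x - p)^4)}"
    proof safe
      fix x assume x: "x \<in> space D" and lt: "\<delta> < \<bar>p - S x\<bar>"
      have "\<delta>^4 < \<bar>p - S x\<bar>^4" using lt d by (intro power_strict_mono) auto
      also have "\<bar>p - S x\<bar>^4 = (S x - p)^4" by (simp add: power_even_abs_numeral) (simp add: power4_eq_xxxx algebra_simps)
      finally have "1 \<le> (S x - p)^4 / \<delta>^4" using d by simp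
      hence "ennreal 1 \<le> ennreal ((S x - p)^4 / \<delta>^4)" by (rule ennreal_leI)
      also have "ennreal ((S x - p)^4 / \<delta>^4) = ennreal (1/\<delta>^4) * ennreal ((S x - p)^4)"
        using d by (simp add: ennreal_mult'[symmetric])
      finally show "1 \<le> ennreal (1/\<delta>^4) * ennreal ((S x - p)^4)" by simp
    qed
    show "{x \<in> space D. 1 \<le> ennreal (1/\<delta>^4) * ennreal ((S x - p)^4)} \<in> sets D" by measurable
  qed
  also have "\<dots> \<le> ennreal (1/\<delta>^4) * (\<integral>\<^sup>+x. ennreal ((S x - p)^4) * indicator (space D) x \<partial>D)"
    by (rule nn_integral_Markov_inequality) measurable
  also have "(\<integral>\<^sup>+x. ennreal ((S x - p)^4) * indicator (space D) x \<partial>D) = I"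
    unfolding I_def by (intro nn_integral_cong) simp
  also have "ennreal (1/\<delta>^4) * I = ennreal (\<mu> / \<delta>^4)"
    unfolding I_eq using d by (simp add: ennreal_mult'[symmetric])
  finally have "measure D {x \<in> space D. \<delta> < \<bar>p - S x\<bar>} \<le> \<mu> / \<delta>^4"
    unfolding measure_def using mu0 d by (intro enn2real_leI) auto
  also have "\<mu> / \<delta>^4 \<le> 2 / (\<delta>^4 * s^2)"
    using mu_le d by (simp add: divide_le_eq field_simps)
  finally show ?thesis unfolding D_def p_def S_def s_def .
qed



definition lowset :: "nat \<Rightarrow> (nat \<Rightarrow> real) \<Rightarrow> nat set \<Rightarrow> bool" where
  "lowset n l A \<longleftrightarrow> A \<subseteq> {..<n} \<and> (\<forall>i\<in>A. \<forall>j\<in>{..<n} - A. l i < l j)"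

lemma lowset_nested:
  assumes B: "lowset n l B" and A: "lowset n l A" and c: "card B \<le> card A"
  shows "B \<subseteq> A"
proof (rule ccontr)
  assume "\<not> B \<subseteq> A"
  then obtain i where i: "i \<in> B" "i \<notin> A" by auto
  have fA: "finite A" and fB: "finite B" using A B unfolding lowset_def by (auto intro: finite_subset)
  have "\<not> A \<subseteq> B"
  proof
    assume "A \<subseteq> B"
    hence "A \<subset> B" using i by auto
    hence "card A < card B" by (rule psubset_card_mono[OF fB])
    thus False using c by simp
  qed
  then obtain j where j: "j \<in> A" "j \<notin> B" by auto
  have "i < n" "j < n" using i j A B unfolding lowset_def by auto
  hence "l i < l j" using B i j unfolding lowset_def by auto
  moreover have "l j < l i" using A i j \<open>i < n\<close> unfolding lowset_def by auto
  ultimately show False by simp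
qed

lemma lowset_exists:
  assumes inj: "inj_on l {..<n}"
  shows "k \<le> n \<Longrightarrow> \<exists>A. lowset n l A \<and> card A = k"
proof (induction k)
  case 0
  show ?case by (rule exI[of _ "{}"]) (simp add: lowset_def)
next
  case (Suc k)
  then obtain A where A: "lowset n l A" "card A = k" by auto
  have AS: "A \<subseteq> {..<n}" using A unfolding lowset_def by auto
  define X where "X = {..<n} - A"
  have fX: "finite X" unfolding X_def by simp
  have "X \<noteq> {}"
  proof
    assume "X = {}"
    hence "{..<n} \<subseteq> A" unfolding X_def by auto
    hence "n \<le> card A" using card_mono[OF _ \<open>{..<n} \<subseteq> A\<close>] AS finite_subset by (metis card_lessThan finite_lessThan)
    thus False using A Suc.prems by simp
  qed
  define mn where "mn = Min (l ` X)"
  have "mn \<in> l ` X" unfolding mn_def using fX \<open>X \<noteq> {}\<close> by (intro Min_in) auto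
  then obtain j where j: "j \<in> X" "l j = mn" by auto
  have jmin: "l j \<le> l y" if "y \<in> X" for y using that fX j(2) unfolding mn_def by (metis Min_le finite_imageI imageI)
  have jn: "j < n" "j \<notin> A" using j unfolding X_def by auto
  show ?case
  proof (rule exI[of _ "insert j A"], intro conjI)
    show "card (insert j A) = Suc k" using A jn AS by (simp add: finite_subset)
    show "lowset n l (insert j A)" unfolding lowset_def
    proof (intro conjI ballI)
      show "insert j A \<subseteq> {..<n}" using AS jn by auto
      fix i i' assume i: "i \<in> insert j A" and i': "i' \<in> {..<n} - insert j A"
      show "l i < l i'"
      proof (cases "i \<in> A")
        case True
        thus ?thesis using A i' unfolding lowset_def by auto
      next
        case False
        hence "i = j" using i by auto
        have "i' \<in> X" using i' unfolding X_def by auto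
        hence "l j \<le> l i'" by (rule jmin)
        moreover have "l j \<noteq> l i'" using inj jn i' unfolding inj_on_def by auto
        ultimately show ?thesis using \<open>i = j\<close> by simp
      qed
    qed
  qed
qed

lemma atomic_cdf_eq: "atomic_cdf n l w x = (\<Sum>i\<in>{i\<in>{..<n}. l i \<le> x}. w i)"
  unfolding atomic_cdf_def by (rule sum.inter_filter[symmetric]) simp

lemma div_facts:
  fixes a N :: nat assumes "N > 0"
  shows "real (a div N) \<le> real a / real N" "real a / real N - 1 \<le> real (a div N)"
proof -
  have "N * (a div N) \<le> a" by simp
  hence "real N * real (a div N) \<le> real a" by (metis of_nat_le_iff of_nat_mult)
  thus "real (a div N) \<le> real a / real N" using assms by (simp add: field_simps)
  have "a < N * (a div N + 1)" using assms
    by (metis add.commute div_mult_mod_eq mod_less_divisor mult.commute distrib_left mult_1_right add_less_cancel_right)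
  hence "real a < real N * (real (a div N) + 1)" by (metis of_nat_less_iff of_nat_mult of_nat_Suc add.commute plus_1_eq_Suc)
  thus "real a / real N - 1 \<le> real (a div N)" using assms by (simp add: field_simps)
qed

lemma det_bound:
  fixes l v :: "nat \<Rightarrow> real"
  assumes inj: "inj_on l {..<n}" and v: "\<And>i. i < n \<Longrightarrow> 0 \<le> v i" and N: "N > 0" and n: "n > 0"
    and grid: "\<And>A j. lowset n l A \<Longrightarrow> j \<le> N \<Longrightarrow> card A = j * n div N \<Longrightarrow>
                  \<bar>real (card A) / real n - (\<Sum>i\<in>A. v i)\<bar> \<le> \<delta>"
  shows "kolmogorov_dist (atomic_cdf n l (\<lambda>_. 1 / real n)) (atomic_cdf n l v) \<le> \<delta> + 1 / real N + 1 / real n"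
  unfolding kolmogorov_dist_def
proof (rule cSUP_least)
  fix x
  define A where "A = {i\<in>{..<n}. l i \<le> x}"
  define T where "T = (\<lambda>C. real (card C) / real n - (\<Sum>i\<in>C. v i))"
  have eq: "atomic_cdf n l (\<lambda>_. 1 / real n) x - atomic_cdf n l v x = T A"
    unfolding atomic_cdf_eq A_def[symmetric] T_def by simp
  have AS: "A \<subseteq> {..<n}" unfolding A_def by auto
  have lowA: "lowset n l A" unfolding lowset_def A_def by auto
  define k where "k = card A"
  have kn: "k \<le> n" unfolding k_def using card_mono[OF _ AS] by simp
  have Smono: "(\<Sum>i\<in>C. v i) \<le> (\<Sum>i\<in>C'. v i)" if "C \<subseteq> C'" "C' \<subseteq> {..<n}" for C C'
    using that v by (intro sum_mono2) (auto intro: finite_subset)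
  show "\<bar>atomic_cdf n l (\<lambda>_. 1 / real n) x - atomic_cdf n l v x\<bar> \<le> \<delta> + 1 / real N + 1 / real n"
    unfolding eq
  proof (cases "k = n")
    case True
    have "\<bar>T A\<bar> \<le> \<delta>" unfolding T_def using grid[OF lowA, of N] True N unfolding k_def by simp
    moreover have "0 \<le> 1 / real N" "0 \<le> 1 / real n" by auto
    ultimately show "\<bar>T A\<bar> \<le> \<delta> + 1 / real N + 1 / real n" by linarith
  next
    case False
    hence kn': "k < n" using kn by simp
    define j0 where "j0 = k * N div n"
    define g0 where "g0 = j0 * n div N"
    define g1 where "g1 = (j0 + 1) * n div N"
    have j0N: "j0 < N"
    proof -
      have "k * N < n * N" using kn' N by simp
      hence "k * N div n < N" using n by (simp add: div_less_iff_less_mult mult.commute)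
      thus ?thesis unfolding j0_def .
    qed
    have g0k: "g0 \<le> k"
    proof -
      have "j0 * n \<le> k * N" unfolding j0_def by (rule div_times_less_eq_dividend)
      hence "j0 * n div N \<le> k * N div N" by (rule div_le_mono)
      thus ?thesis unfolding g0_def using N by simp
    qed
    have kg1: "k \<le> g1"
    proof -
      have "k * N < (j0 + 1) * n" unfolding j0_def using n
        by (metis add.commute div_mult_mod_eq mod_less_divisor mult.commute distrib_left mult_1_right add_less_cancel_right distrib_right mult_1)
      hence "k * N div N \<le> (j0 + 1) * n div N" by (intro div_le_mono) simp
      thus ?thesis unfolding g1_def using N by simp
    qed
    have g1n: "g1 \<le> n"
    proof -
      have "j0 + 1 \<le> N" using j0N by simp
      hence "(j0 + 1) * n \<le> N * n" by (rule mult_right_mono) simp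
      hence "(j0 + 1) * n div N \<le> N * n div N" by (rule div_le_mono)
      thus ?thesis unfolding g1_def using N by simp
    qed
    have gap: "real g1 - real g0 \<le> real n / real N + 1"
    proof -
      have "real g1 \<le> real ((j0 + 1) * n) / real N" unfolding g1_def using div_facts(1)[OF N] by blast
      moreover have "real (j0 * n) / real N - 1 \<le> real g0" unfolding g0_def using div_facts(2)[OF N] by blast
      ultimately show ?thesis using N by (simp add: field_simps)
    qed
    obtain B where B: "lowset n l B" "card B = g0" using lowset_exists[OF inj, of g0] g0k kn by auto
    obtain B' where B': "lowset n l B'" "card B' = g1" using lowset_exists[OF inj, of g1] g1n by auto
    have BA: "B \<subseteq> A" using lowset_nested[OF B(1) lowA] B g0k unfolding k_def by simp
    have AB': "A \<subseteq> B'" using lowset_nested[OF lowA B'(1)] B' kg1 unfolding k_def by simp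
    have B'S: "B' \<subseteq> {..<n}" using B' unfolding lowset_def by auto
    have TB: "\<bar>T B\<bar> \<le> \<delta>" unfolding T_def using grid[OF B(1), of j0] B j0N unfolding g0_def by simp
    have TB': "\<bar>T B'\<bar> \<le> \<delta>" unfolding T_def using grid[OF B'(1), of "j0 + 1"] B' j0N unfolding g1_def by simp
    have gapn: "(real g1 - real g0) / real n \<le> 1 / real N + 1 / real n"
    proof -
      have "(real g1 - real g0) / real n \<le> (real n / real N + 1) / real n" using gap n by (intro divide_right_mono) auto
      also have "\<dots> = 1 / real N + 1 / real n" using n by (simp add: field_simps)
      finally show ?thesis .
    qed
    have up: "T A \<le> T B + (real g1 - real g0) / real n"
    proof -
      have "(\<Sum>i\<in>B. v i) \<le> (\<Sum>i\<in>A. v i)" using BA AS by (rule Smono)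
      moreover have "real k / real n \<le> real g1 / real n" using kg1 by (intro divide_right_mono) auto
      moreover have "real g0 / real n - (\<Sum>i\<in>B. v i) + (real g1 - real g0) / real n = real g1 / real n - (\<Sum>i\<in>B. v i)"
        by (simp add: diff_divide_distrib)
      ultimately show ?thesis unfolding T_def k_def[symmetric] B(2) by linarith
    qed
    have lo: "T B' - (real g1 - real g0) / real n \<le> T A"
    proof -
      have "(\<Sum>i\<in>A. v i) \<le> (\<Sum>i\<in>B'. v i)" using AB' B'S by (rule Smono)
      moreover have "real g0 / real n \<le> real k / real n" using g0k by (intro divide_right_mono) auto
      moreover have "real g1 / real n - (\<Sum>i\<in>B'. v i) - (real g1 - real g0) / real n = real g0 / real n - (\<Sum>i\<in>B'. v i)"
        by (simp add: diff_divide_distrib)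
      ultimately show ?thesis unfolding T_def k_def[symmetric] B'(2) by linarith
    qed
    show "\<bar>T A\<bar> \<le> \<delta> + 1 / real N + 1 / real n" using up lo TB TB' gapn by (simp add: abs_le_iff)
  qed
qed simp



lemma comp_meas_n: "i < n \<Longrightarrow> (\<lambda>x. x i) \<in> borel_measurable (PiM {..<n} (\<lambda>_. borel :: real measure))"
  by (rule measurable_component_singleton) simp

lemma lowset_sets:
  assumes A: "A \<subseteq> {..<n}"
  shows "{x \<in> space (PiM {..<n} (\<lambda>_. borel :: real measure)). lowset n x A} \<in> sets (PiM {..<n} (\<lambda>_. borel))"
proof -
  have fA: "finite A" using A finite_subset by blast
  have "{x \<in> space (PiM {..<n} (\<lambda>_. borel :: real measure)). \<forall>i\<in>A. \<forall>j\<in>{..<n} - A. x i < x j} \<in> sets (PiM {..<n} (\<lambda>_. borel))"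
  proof (rule sets.sets_Collect_finite_All[OF _ fA])
    fix i assume i: "i \<in> A"
    show "{x \<in> space (PiM {..<n} (\<lambda>_. borel :: real measure)). \<forall>j\<in>{..<n} - A. x i < x j} \<in> sets (PiM {..<n} (\<lambda>_. borel))"
    proof (rule sets.sets_Collect_finite_All)
      fix j assume j: "j \<in> {..<n} - A"
      have "i < n" "j < n" using i j A by auto
      note [measurable] = comp_meas_n[OF this(1)] comp_meas_n[OF this(2)]
      show "{x \<in> space (PiM {..<n} (\<lambda>_. borel :: real measure)). x i < x j} \<in> sets (PiM {..<n} (\<lambda>_. borel))"
        by measurable
    qed simp
  qed
  thus ?thesis using A unfolding lowset_def by simp
qed

lemma dev_sets:
  assumes A: "A \<subseteq> {..<n}"
  shows "{x \<in> space (PiM {..<n} (\<lambda>_. borel :: real measure)). \<delta> < \<bar>c - (\<Sum>i\<in>A. x i)\<bar>} \<in> sets (PiM {..<n} (\<lambda>_. borel))"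
proof -
  note [measurable] = sum_sub_meas[OF A]
  show ?thesis by measurable
qed

definition badset :: "'a measure \<Rightarrow> ('a \<Rightarrow> nat \<Rightarrow> real) \<Rightarrow> ('a \<Rightarrow> nat \<Rightarrow> real) \<Rightarrow> nat \<Rightarrow> nat \<Rightarrow> real \<Rightarrow> 'a set" where
  "badset M L W n N \<delta> = {\<omega> \<in> space M. \<exists>A\<in>Pow {..<n}. (\<exists>j\<le>N. card A = j * n div N) \<and> lowset n (L \<omega>) A \<and>
                    \<delta> < \<bar>real (card A) / real n - (\<Sum>i\<in>A. W \<omega> i)\<bar>}"

lemma bad_prob:
  fixes M :: "'a measure" and L W :: "'a \<Rightarrow> nat \<Rightarrow> real"
  assumes P: "prob_space M" and n: "n \<ge> 1" and b: "b > 0" and d: "\<delta> > 0" and nb: "real n * b \<ge> 1" and N: "N > 0"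
    and Lm: "L \<in> M \<rightarrow>\<^sub>M PiM {..<n} (\<lambda>_. borel)" and Wm: "W \<in> M \<rightarrow>\<^sub>M PiM {..<n} (\<lambda>_. borel)"
    and ind: "prob_space.indep_var M (PiM {..<n} (\<lambda>_. borel)) L (PiM {..<n} (\<lambda>_. borel)) W"
    and Wd: "distr M (PiM {..<n} (\<lambda>_. borel)) W = dirichlet_sym n b"
  shows "badset M L W n N \<delta> \<in> sets M" "measure M (badset M L W n N \<delta>) \<le> real (N + 1) * (2 / (\<delta>^4 * (real n * b)^2))"
proof -
  define Bad where "Bad = badset M L W n N \<delta>"
  note Bad_def0 = Bad_def
  note Bad_def = Bad_def[unfolded badset_def]
  interpret prob_space M by (rule P)
  let ?P = "PiM {..<n} (\<lambda>_. borel :: real measure)"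
  define \<A> where "\<A> = {A \<in> Pow {..<n}. \<exists>j\<le>N. card A = j * n div N}"
  define E where "E = (\<lambda>A. {x \<in> space ?P. lowset n x A})"
  define F where "F = (\<lambda>A. {x \<in> space ?P. \<delta> < \<bar>real (card A) / real n - (\<Sum>i\<in>A. x i)\<bar>})"
  define q where "q = 2 / (\<delta>^4 * (real n * b)^2)"
  have finA: "finite \<A>" unfolding \<A>_def by simp
  have Esets: "E A \<in> sets ?P" if "A \<in> \<A>" for A unfolding E_def using that lowset_sets by (auto simp: \<A>_def)
  have Fsets: "F A \<in> sets ?P" if "A \<in> \<A>" for A unfolding F_def using that dev_sets by (auto simp: \<A>_def)
  have Bad_eq: "Bad = (\<Union>A\<in>\<A>. L -` E A \<inter> W -` F A \<inter> space M)"
    unfolding Bad_def \<A>_def E_def F_def using measurable_space[OF Lm] measurable_space[OF Wm] by auto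
  have Xsets: "L -` E A \<inter> W -` F A \<inter> space M \<in> sets M" if "A \<in> \<A>" for A
  proof -
    have "L -` E A \<inter> space M \<in> sets M" by (rule measurable_sets[OF Lm Esets[OF that]])
    moreover have "W -` F A \<inter> space M \<in> sets M" by (rule measurable_sets[OF Wm Fsets[OF that]])
    ultimately have "(L -` E A \<inter> space M) \<inter> (W -` F A \<inter> space M) \<in> sets M" by blast
    moreover have "(L -` E A \<inter> space M) \<inter> (W -` F A \<inter> space M) = L -` E A \<inter> W -` F A \<inter> space M" by auto
    ultimately show ?thesis by simp
  qed
  show "badset M L W n N \<delta> \<in> sets M" unfolding Bad_def0[symmetric] Bad_eq using finA Xsets by blast
  have "measure M Bad \<le> (\<Sum>A\<in>\<A>. measure M (L -` E A \<inter> W -` F A \<inter> space M))"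
    unfolding Bad_eq using finA Xsets by (intro measure_UNION_le) auto
  also have "\<dots> = (\<Sum>A\<in>\<A>. prob (L -` E A \<inter> space M) * prob (W -` F A \<inter> space M))"
  proof (intro sum.cong refl)
    fix A assume A: "A \<in> \<A>"
    have "prob ((\<lambda>x. (L x, W x)) -` (E A \<times> F A) \<inter> space M) = prob (L -` E A \<inter> space M) * prob (W -` F A \<inter> space M)"
      by (rule indep_varD[OF ind Esets[OF A] Fsets[OF A]])
    moreover have "(\<lambda>x. (L x, W x)) -` (E A \<times> F A) \<inter> space M = L -` E A \<inter> W -` F A \<inter> space M" by auto
    ultimately show "measure M (L -` E A \<inter> W -` F A \<inter> space M) = prob (L -` E A \<inter> space M) * prob (W -` F A \<inter> space M)"
      by simp
  qed
  also have "\<dots> \<le> (\<Sum>A\<in>\<A>. prob (L -` E A \<inter> space M) * q)"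
  proof (intro sum_mono mult_left_mono)
    fix A assume A: "A \<in> \<A>"
    have AS: "A \<subseteq> {..<n}" using A unfolding \<A>_def by auto
    have "prob (W -` F A \<inter> space M) = measure (distr M ?P W) (F A)"
      by (rule measure_distr[OF Wm Fsets[OF A], symmetric])
    also have "\<dots> = measure (dirichlet_sym n b) (F A)" unfolding Wd ..
    also have "\<dots> \<le> q" unfolding F_def q_def
      using dirichlet_tail[OF n b AS d nb] by (simp add: space_dirichlet)
    finally show "prob (W -` F A \<inter> space M) \<le> q" .
  qed simp
  also have "\<dots> = q * (\<Sum>A\<in>\<A>. prob (L -` E A \<inter> space M))" by (simp add: sum_distrib_left mult_ac)
  also have "(\<Sum>A\<in>\<A>. prob (L -` E A \<inter> space M)) \<le> real (N + 1)"
  proof -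
    define G where "G = (\<lambda>j. j * n div N) ` {..N}"
    have fG: "finite G" unfolding G_def by simp
    have cG: "card G \<le> N + 1" unfolding G_def using card_image_le[of "{..N}" "\<lambda>j. j * n div N"] by simp
    have "(\<Sum>A\<in>\<A>. prob (L -` E A \<inter> space M)) = (\<Sum>g\<in>G. \<Sum>A\<in>{A. A \<in> \<A> \<and> card A = g}. prob (L -` E A \<inter> space M))"
      by (rule sum.group[symmetric, OF finA fG]) (auto simp: \<A>_def G_def)
    also have "\<dots> \<le> (\<Sum>g\<in>G. 1)"
    proof (intro sum_mono)
      fix g assume g: "g \<in> G"
      let ?S = "{A. A \<in> \<A> \<and> card A = g}"
      have fS: "finite ?S" using finA by simp
      have "(\<Sum>A\<in>?S. prob (L -` E A \<inter> space M)) = prob (\<Union>A\<in>?S. L -` E A \<inter> space M)"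
      proof (rule finite_measure_finite_Union[symmetric, OF fS])
        show "(\<lambda>A. L -` E A \<inter> space M) ` ?S \<subseteq> sets M"
          using measurable_sets[OF Lm Esets] by auto
        show "disjoint_family_on (\<lambda>A. L -` E A \<inter> space M) ?S"
        proof (unfold disjoint_family_on_def, intro ballI impI)
          fix A B assume A: "A \<in> ?S" and B: "B \<in> ?S" and AB: "A \<noteq> B"
          show "(L -` E A \<inter> space M) \<inter> (L -` E B \<inter> space M) = {}"
          proof (rule ccontr)
            assume "(L -` E A \<inter> space M) \<inter> (L -` E B \<inter> space M) \<noteq> {}"
            then obtain \<omega> where "lowset n (L \<omega>) A" "lowset n (L \<omega>) B" unfolding E_def by auto
            hence "A \<subseteq> B" "B \<subseteq> A" using A B lowset_nested by auto
            thus False using AB by auto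
          qed
        qed
      qed
      also have "\<dots> \<le> 1" by (rule prob_le_1)
      finally show "(\<Sum>A\<in>?S. prob (L -` E A \<inter> space M)) \<le> 1" .
    qed
    also have "\<dots> = real (card G)" by simp
    also have "\<dots> \<le> real (N + 1)" using cG by linarith
    finally show ?thesis .
  qed
  hence "q * (\<Sum>A\<in>\<A>. prob (L -` E A \<inter> space M)) \<le> q * real (N + 1)"
    by (rule mult_left_mono) (simp add: q_def)
  finally show "measure M (badset M L W n N \<delta>) \<le> real (N + 1) * (2 / (\<delta>^4 * (real n * b)^2))" unfolding q_def Bad_def0[symmetric] by (simp add: mult_ac)
qed



lemma atomic_cdf_abs_le: "\<bar>atomic_cdf n l w x\<bar> \<le> (\<Sum>i<n. \<bar>w i\<bar>)"
  unfolding atomic_cdf_def by (rule order_trans[OF sum_abs]) (intro sum_mono, auto)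

lemma kd_nonneg: "kolmogorov_dist (atomic_cdf n l u) (atomic_cdf n l v) \<ge> 0"
proof -
  have bdd: "bdd_above (range (\<lambda>x. \<bar>atomic_cdf n l u x - atomic_cdf n l v x\<bar>))"
  proof (rule bdd_aboveI2)
    fix x
    have "\<bar>atomic_cdf n l u x - atomic_cdf n l v x\<bar> \<le> \<bar>atomic_cdf n l u x\<bar> + \<bar>atomic_cdf n l v x\<bar>" by (rule abs_triangle_ineq4)
    also have "\<dots> \<le> (\<Sum>i<n. \<bar>u i\<bar>) + (\<Sum>i<n. \<bar>v i\<bar>)" by (intro add_mono atomic_cdf_abs_le)
    finally show "\<bar>atomic_cdf n l u x - atomic_cdf n l v x\<bar> \<le> (\<Sum>i<n. \<bar>u i\<bar>) + (\<Sum>i<n. \<bar>v i\<bar>)" .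
  qed
  show ?thesis unfolding kolmogorov_dist_def by (rule cSUP_upper2[OF bdd UNIV_I]) simp
qed

lemma lowset_restrict: "lowset n (restrict l {..<n}) A = lowset n l A"
  unfolding lowset_def by auto

theorem theorem4p2:
  fixes M :: "'a measure" and \<beta> :: real
    and lam :: "nat \<Rightarrow> 'a \<Rightarrow> nat \<Rightarrow> real"
    and w :: "nat \<Rightarrow> 'a \<Rightarrow> nat \<Rightarrow> real"
  assumes "prob_space M"
    and "\<beta> > 0"
    and lam_meas: "\<And>n. n \<ge> 1 \<Longrightarrow>
           (\<lambda>\<omega>. restrict (lam n \<omega>) {..<n}) \<in> M \<rightarrow>\<^sub>M PiM {..<n} (\<lambda>_. borel)"
    and w_meas: "\<And>n. n \<ge> 1 \<Longrightarrow>
           (\<lambda>\<omega>. restrict (w n \<omega>) {..<n}) \<in> M \<rightarrow>\<^sub>M PiM {..<n} (\<lambda>_. borel)"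
    and distinct: "\<And>n. n \<ge> 1 \<Longrightarrow>
           AE \<omega> in M. \<forall>i<n. \<forall>j<n. i \<noteq> j \<longrightarrow> lam n \<omega> i \<noteq> lam n \<omega> j"
    and w_dirichlet: "\<And>n. n \<ge> 1 \<Longrightarrow>
           distr M (PiM {..<n} (\<lambda>_. borel)) (\<lambda>\<omega>. restrict (w n \<omega>) {..<n})
             = dirichlet_sym n (\<beta> / 2)"
    and indep: "\<And>n. n \<ge> 1 \<Longrightarrow>
           prob_space.indep_var M
             (PiM {..<n} (\<lambda>_. borel)) (\<lambda>\<omega>. restrict (lam n \<omega>) {..<n})
             (PiM {..<n} (\<lambda>_. borel)) (\<lambda>\<omega>. restrict (w n \<omega>) {..<n})"
  shows "AE \<omega> in M.
           (\<lambda>n. kolmogorov_dist (atomic_cdf n (lam n \<omega>) (\<lambda>_. 1 / real n))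
                                 (atomic_cdf n (lam n \<omega>) (w n \<omega>))) \<longlonglongrightarrow> 0"
proof -
  interpret prob_space M by fact
  define b where "b = \<beta> / 2"
  have b: "b > 0" unfolding b_def using \<open>\<beta> > 0\<close> by simp
  define D where "D = (\<lambda>n \<omega>. kolmogorov_dist (atomic_cdf n (lam n \<omega>) (\<lambda>_. 1 / real n)) (atomic_cdf n (lam n \<omega>) (w n \<omega>)))"
  have AEdist: "AE \<omega> in M. \<forall>n. n \<ge> 1 \<longrightarrow> inj_on (lam n \<omega>) {..<n}"
    unfolding AE_all_countable
  proof
    fix n :: nat
    show "AE \<omega> in M. n \<ge> 1 \<longrightarrow> inj_on (lam n \<omega>) {..<n}"
    proof (cases "n \<ge> 1")
      case True
      show ?thesis using distinct[OF True] by eventually_elim (auto simp: inj_on_def)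
    qed simp
  qed
  have AEpos: "AE \<omega> in M. \<forall>n. n \<ge> 1 \<longrightarrow> (\<forall>i<n. 0 \<le> w n \<omega> i)"
    unfolding AE_all_countable
  proof
    fix n :: nat
    show "AE \<omega> in M. n \<ge> 1 \<longrightarrow> (\<forall>i<n. 0 \<le> w n \<omega> i)"
    proof (cases "n \<ge> 1")
      case True
      have eq: "{x \<in> space (PiM {..<n} (\<lambda>_. borel)). \<forall>i<n. 0 < (x i::real)} = Pi\<^sub>E {..<n} (\<lambda>_. {0<..})"
        unfolding space_PiM by (auto simp: PiE_iff extensional_def)
      have 2: "{x \<in> space (PiM {..<n} (\<lambda>_. borel)). \<forall>i<n. 0 < (x i::real)} \<in> sets (PiM {..<n} (\<lambda>_. borel))"
        unfolding eq by (rule sets_PiM_I_finite) auto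
      have "AE x in distr M (PiM {..<n} (\<lambda>_. borel)) (\<lambda>\<omega>. restrict (w n \<omega>) {..<n}). \<forall>i<n. 0 < x i"
        unfolding w_dirichlet[OF True] by (rule AE_dirichlet_pos)
      hence "AE \<omega> in M. \<forall>i<n. 0 < restrict (w n \<omega>) {..<n} i"
        by (subst (asm) AE_distr_iff[OF w_meas[OF True] 2])
      thus ?thesis by eventually_elim (auto intro: less_imp_le)
    qed simp
  qed
  have AEk: "AE \<omega> in M. \<forall>k::nat. eventually (\<lambda>n. D n \<omega> \<le> 1 / real (k + 1)) sequentially"
    unfolding AE_all_countable
  proof
    fix k :: nat
    define N where "N = 3 * (k + 1)"
    define \<delta> where "\<delta> = 1 / real N"
    have N: "N > 0" unfolding N_def by simp
    have d: "\<delta> > 0" unfolding \<delta>_def using N by simp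
    define C where "C = real (N + 1) * 2 / (\<delta>^4 * b^2)"
    define Bad where "Bad = (\<lambda>n. if n \<ge> 1 \<and> real n * b \<ge> 1 then
        badset M (\<lambda>\<omega>. restrict (lam n \<omega>) {..<n}) (\<lambda>\<omega>. restrict (w n \<omega>) {..<n}) n N \<delta> else {})"
    have Bsets: "Bad n \<in> sets M" for n
    proof (cases "n \<ge> 1 \<and> real n * b \<ge> 1")
      case True
      hence n1: "n \<ge> 1" and nb: "real n * b \<ge> 1" by auto
      have wd: "distr M (PiM {..<n} (\<lambda>_. borel)) (\<lambda>\<omega>. restrict (w n \<omega>) {..<n}) = dirichlet_sym n b"
        using w_dirichlet[OF n1] unfolding b_def .
      show ?thesis unfolding Bad_def if_P[OF True]
        by (rule bad_prob(1)[OF \<open>prob_space M\<close> n1 b d nb N lam_meas[OF n1] w_meas[OF n1] indep[OF n1] wd])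
    qed (auto simp: Bad_def)
    have C0: "C \<ge> 0" unfolding C_def by simp
    have Bmeas: "measure M (Bad n) \<le> C * inverse (real n ^ 2)" for n
    proof (cases "n \<ge> 1 \<and> real n * b \<ge> 1")
      case True
      hence n1: "n \<ge> 1" and nb: "real n * b \<ge> 1" by auto
      have wd: "distr M (PiM {..<n} (\<lambda>_. borel)) (\<lambda>\<omega>. restrict (w n \<omega>) {..<n}) = dirichlet_sym n b"
        using w_dirichlet[OF n1] unfolding b_def .
      have "measure M (Bad n) \<le> real (N + 1) * (2 / (\<delta>^4 * (real n * b)^2))" unfolding Bad_def if_P[OF True]
        by (rule bad_prob(2)[OF \<open>prob_space M\<close> n1 b d nb N lam_meas[OF n1] w_meas[OF n1] indep[OF n1] wd])
      also have "\<dots> = C * inverse (real n ^ 2)" unfolding C_def using n1 b d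
        by (simp add: field_simps power_mult_distrib)
      finally show ?thesis .
    qed (use C0 in \<open>auto simp: Bad_def\<close>)
    have "summable (\<lambda>n. measure M (Bad n))"
    proof (rule summable_comparison_test'[where N=0])
      show "summable (\<lambda>n. C * inverse (real n ^ 2))"
        by (rule summable_mult) (rule inverse_power_summable, simp)
      show "norm (measure M (Bad n)) \<le> C * inverse (real n ^ 2)" if "n \<ge> 0" for n using Bmeas[of n] by simp
    qed
    hence BC: "AE \<omega> in M. eventually (\<lambda>n. \<omega> \<in> space M - Bad n) sequentially"
      using Bsets by (intro borel_cantelli_AE1) (auto simp: less_top[symmetric])
    show "AE \<omega> in M. eventually (\<lambda>n. D n \<omega> \<le> 1 / real (k + 1)) sequentially"
      using BC AEdist AEpos
    proof eventually_elim
      case (elim \<omega>)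
      obtain n0 :: nat where n0: "real n0 \<ge> 1 / b" using real_arch_simple by blast
      have ev: "eventually (\<lambda>n. n \<ge> max N n0 + 1) sequentially" by (rule eventually_ge_at_top)
      show ?case using elim(1) ev
      proof (eventually_elim)
        case (elim n)
        hence nN: "n \<ge> N" and n1: "n \<ge> 1" and nn0: "n \<ge> n0" and notbad: "\<omega> \<in> space M" "\<omega> \<notin> Bad n" by auto
        have nb: "real n * b \<ge> 1"
        proof -
          have "1 / b \<le> real n" using n0 nn0 by linarith
          thus ?thesis using b by (simp add: field_simps)
        qed
        have inj: "inj_on (lam n \<omega>) {..<n}" using \<open>\<forall>n. n \<ge> 1 \<longrightarrow> inj_on (lam n \<omega>) {..<n}\<close> n1 by auto
        have v: "\<And>i. i < n \<Longrightarrow> 0 \<le> w n \<omega> i" using \<open>\<forall>n. n \<ge> 1 \<longrightarrow> (\<forall>i<n. 0 \<le> w n \<omega> i)\<close> n1 by auto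
        have grid: "\<bar>real (card A) / real n - (\<Sum>i\<in>A. w n \<omega> i)\<bar> \<le> \<delta>"
          if A: "lowset n (lam n \<omega>) A" and j: "j \<le> N" and cA: "card A = j * n div N" for A j
        proof (rule ccontr)
          assume "\<not> ?thesis"
          hence lt: "\<delta> < \<bar>real (card A) / real n - (\<Sum>i\<in>A. w n \<omega> i)\<bar>" by simp
          have AS: "A \<subseteq> {..<n}" using A unfolding lowset_def by auto
          have "(\<Sum>i\<in>A. restrict (w n \<omega>) {..<n} i) = (\<Sum>i\<in>A. w n \<omega> i)" using AS by (intro sum.cong) auto
          hence "\<omega> \<in> Bad n" unfolding Bad_def badset_def using n1 nb notbad(1) AS j cA A lt lowset_restrict[of n "lam n \<omega>" A]
            by auto
          thus False using notbad by simp
        qed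
        have "D n \<omega> \<le> \<delta> + 1 / real N + 1 / real n"
          unfolding D_def by (rule det_bound[OF inj v N _ grid]) (use n1 in auto)
        also have "\<dots> \<le> 1 / real N + 1 / real N + 1 / real N"
        proof -
          have "1 / real n \<le> 1 / real N" using nN N by (intro divide_left_mono) auto
          thus ?thesis unfolding \<delta>_def by linarith
        qed
        also have "\<dots> = 1 / real (k + 1)" unfolding N_def by (simp add: field_simps)
        finally show ?case .
      qed
    qed
  qed
  show ?thesis using AEk
  proof eventually_elim
    case (elim \<omega>)
    have "(\<lambda>n. D n \<omega>) \<longlonglongrightarrow> 0"
    proof (rule order_tendstoI)
      fix a :: real assume "a < 0"
      thus "eventually (\<lambda>n. a < D n \<omega>) sequentially"
        unfolding D_def using kd_nonneg by (intro always_eventually allI) (rule order.strict_trans2)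
    next
      fix a :: real assume "0 < a"
      then obtain m where m: "m > 0" "inverse (real m) < a" using ex_inverse_of_nat_less by blast
      hence k: "1 / real (m - 1 + 1) < a" by (simp add: inverse_eq_divide)
      show "eventually (\<lambda>n. D n \<omega> < a) sequentially" using elim[rule_format, of "m - 1"]
        by eventually_elim (use k in linarith)
    qed
    thus ?case unfolding D_def .
  qed
qed


end
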